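(* For every monoid $M$ there is a simple or $0$-simple monoid $N$ such that $\mathfrak{L}(\mathrm{Val},\mathrm{CF},M)=\mathfrak{L}(\mathrm{Val},\mathrm{CF},N)$.
   Context: An ideal of a semigroup $S$ is $I\subseteq S$ with $S^1IS^1\subseteq I$. $S$ is simple if it has no proper ideal; $S$ with a zero is $0$-simple if its only ideals are $\{0\}$ and $S$ and $SS\ne\{0\}$. A context-free valence grammar over a monoid $N$ is $(V,T,P,S,N)$ with nonterminals $V$, terminals $T$, start symbol $S$ and a finite set $P$ of rules $(A\to\alpha,n)$ with $A\in V$, $\alpha\in(V\cup T)^*$, $n\in N$. One step: $(w_1Aw_2,m)\Rightarrow(w_1\alpha w_2,mn)$ for a rule $(A\to\alpha,n)$. The generated language is $\{w\in T^*:(S,1)\Rightarrow^*(w,1)\}$. $\mathfrak{L}(\mathrm{Val},\mathrm{CF},N)$ is the family of languages generated by such grammars over $N$. *)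

theory Defs
  imports "HOL-Algebra.Group"
begin

definition sgrp_ideal :: "('a, 'b) monoid_scheme \<Rightarrow> 'a set \<Rightarrow> bool" where
  "sgrp_ideal S I \<longleftrightarrow> I \<noteq> {} \<and> I \<subseteq> carrier S \<and>
     (\<forall>x\<in>carrier S. \<forall>a\<in>I. \<forall>y\<in>carrier S. x \<otimes>\<^bsub>S\<^esub> a \<otimes>\<^bsub>S\<^esub> y \<in> I)"

definition is_zero :: "('a, 'b) monoid_scheme \<Rightarrow> 'a \<Rightarrow> bool" where
  "is_zero S z \<longleftrightarrow> z \<in> carrier S \<and>
     (\<forall>x\<in>carrier S. z \<otimes>\<^bsub>S\<^esub> x = z \<and> x \<otimes>\<^bsub>S\<^esub> z = z)"

definition simple_sgrp :: "('a, 'b) monoid_scheme \<Rightarrow> bool" where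
  "simple_sgrp S \<longleftrightarrow> (\<forall>I. sgrp_ideal S I \<longrightarrow> I = carrier S)"

definition zero_simple_sgrp :: "('a, 'b) monoid_scheme \<Rightarrow> bool" where
  "zero_simple_sgrp S \<longleftrightarrow> (\<exists>z. is_zero S z \<and>
     (\<forall>I. sgrp_ideal S I \<longrightarrow> I = {z} \<or> I = carrier S) \<and>
     (\<exists>x\<in>carrier S. \<exists>y\<in>carrier S. x \<otimes>\<^bsub>S\<^esub> y \<noteq> z))"

text \<open>Sentential forms are lists over nonterminals (Inl) and terminals (Inr).
A rule (A, alpha, n) stands for (A \<rightarrow> alpha, n).\<close>

record ('n, 't, 'm) val_grammar =
  nonterms :: "'n set"
  terms :: "'t set"
  rules :: "('n \<times> ('n + 't) list \<times> 'm) set"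
  start :: 'n

definition valid_val_grammar ::
    "('m, 'b) monoid_scheme \<Rightarrow> ('n, 't, 'm) val_grammar \<Rightarrow> bool" where
  "valid_val_grammar M G \<longleftrightarrow>
     finite (nonterms G) \<and> finite (terms G) \<and> finite (rules G) \<and>
     start G \<in> nonterms G \<and>
     (\<forall>(A, \<alpha>, n) \<in> rules G. A \<in> nonterms G \<and> n \<in> carrier M \<and>
        set \<alpha> \<subseteq> Inl ` nonterms G \<union> Inr ` terms G)"

definition val_step ::
    "('m, 'b) monoid_scheme \<Rightarrow> ('n, 't, 'm) val_grammar \<Rightarrow>
     ((('n + 't) list \<times> 'm) \<times> (('n + 't) list \<times> 'm)) set" where
  "val_step M G = {((w1 @ [Inl A] @ w2, m), (w1 @ \<alpha> @ w2, m \<otimes>\<^bsub>M\<^esub> n)) | w1 w2 A \<alpha> m n.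
       (A, \<alpha>, n) \<in> rules G}"

definition val_lang ::
    "('m, 'b) monoid_scheme \<Rightarrow> ('n, 't, 'm) val_grammar \<Rightarrow> 't list set" where
  "val_lang M G = {w. set w \<subseteq> terms G \<and>
     (([Inl (start G)], \<one>\<^bsub>M\<^esub>), (map Inr w, \<one>\<^bsub>M\<^esub>)) \<in> (val_step M G)\<^sup>*}"

text \<open>The language family L(Val,CF,M); nonterminals and terminals are drawn from
the countable universe nat (alphabets are finite subsets of it).\<close>

definition val_cf_family :: "('m, 'b) monoid_scheme \<Rightarrow> nat list set set" where
  "val_cf_family M = {L. \<exists>G :: (nat, nat, 'm) val_grammar.
       valid_val_grammar M G \<and> L = val_lang M G}"

end

theory Submission
  imports Defs
begin

definition Dset :: "('a,'b) monoid_scheme \<Rightarrow> 'a set" where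
  "Dset M = {x \<in> carrier M. \<exists>u\<in>carrier M. \<exists>v\<in>carrier M. u \<otimes>\<^bsub>M\<^esub> x \<otimes>\<^bsub>M\<^esub> v = \<one>\<^bsub>M\<^esub>}"

definition nmult :: "('a,'b) monoid_scheme \<Rightarrow> 'a option \<Rightarrow> 'a option \<Rightarrow> 'a option" where
  "nmult M x y = (case x of Some a \<Rightarrow> (case y of Some b \<Rightarrow>
      if a \<otimes>\<^bsub>M\<^esub> b \<in> Dset M then Some (a \<otimes>\<^bsub>M\<^esub> b) else None | None \<Rightarrow> None) | None \<Rightarrow> None)"

definition NM :: "('a,'b) monoid_scheme \<Rightarrow> 'a option monoid" where
  "NM M = \<lparr>carrier = Some ` Dset M \<union> {None}, mult = nmult M, one = Some \<one>\<^bsub>M\<^esub>\<rparr>"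

lemma nmult_Some_iff:
  "nmult M x y = Some p \<longleftrightarrow> (\<exists>a b. x = Some a \<and> y = Some b \<and> p = a \<otimes>\<^bsub>M\<^esub> b \<and> a \<otimes>\<^bsub>M\<^esub> b \<in> Dset M)"
  by (auto simp: nmult_def split: option.splits)

lemma nmult_None [simp]: "nmult M None y = None" "nmult M x None = None"
  by (auto simp: nmult_def split: option.splits)

context monoid
begin

lemma one_D: "\<one> \<in> Dset G"
  unfolding Dset_def by (auto intro!: bexI[of _ \<one>])

lemma D_left: assumes "a \<otimes> b \<in> Dset G" "a \<in> carrier G" "b \<in> carrier G" shows "a \<in> Dset G"
proof -
  from assms obtain u v where uv: "u \<in> carrier G" "v \<in> carrier G" "u \<otimes> (a \<otimes> b) \<otimes> v = \<one>"
    unfolding Dset_def by auto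
  hence "u \<otimes> a \<otimes> (b \<otimes> v) = \<one>" using assms by (simp add: m_assoc)
  thus ?thesis using uv assms unfolding Dset_def by blast
qed

lemma D_right: assumes "a \<otimes> b \<in> Dset G" "a \<in> carrier G" "b \<in> carrier G" shows "b \<in> Dset G"
proof -
  from assms obtain u v where uv: "u \<in> carrier G" "v \<in> carrier G" "u \<otimes> (a \<otimes> b) \<otimes> v = \<one>"
    unfolding Dset_def by auto
  hence "(u \<otimes> a) \<otimes> b \<otimes> v = \<one>" using assms by (simp add: m_assoc)
  thus ?thesis using uv assms unfolding Dset_def by blast
qed

lemma D_carrier: "x \<in> Dset G \<Longrightarrow> x \<in> carrier G" unfolding Dset_def by auto

lemma NM_monoid: "monoid (NM G)"
proof (unfold_locales)
  fix x y assume "x \<in> carrier (NM G)" "y \<in> carrier (NM G)"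
  thus "x \<otimes>\<^bsub>NM G\<^esub> y \<in> carrier (NM G)"
    by (auto simp: NM_def nmult_def split: option.splits)
next
  fix x y z assume xyz: "x \<in> carrier (NM G)" "y \<in> carrier (NM G)" "z \<in> carrier (NM G)"
  show "x \<otimes>\<^bsub>NM G\<^esub> y \<otimes>\<^bsub>NM G\<^esub> z = x \<otimes>\<^bsub>NM G\<^esub> (y \<otimes>\<^bsub>NM G\<^esub> z)"
  proof (cases "x = None \<or> y = None \<or> z = None")
    case True thus ?thesis by (auto simp: NM_def)
  next
    case False
    then obtain a b c where abc: "x = Some a" "y = Some b" "z = Some c" by auto
    with xyz have c: "a \<in> carrier G" "b \<in> carrier G" "c \<in> carrier G"
      by (auto simp: NM_def D_carrier)
    have 1: "a \<otimes> b \<in> Dset G" if "a \<otimes> b \<otimes> c \<in> Dset G" using D_left that c by auto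
    have 2: "b \<otimes> c \<in> Dset G" if "a \<otimes> (b \<otimes> c) \<in> Dset G" using D_right that c by auto
    show ?thesis using abc c 1 2 by (auto simp: NM_def nmult_def m_assoc)
  qed
next
  show "\<one>\<^bsub>NM G\<^esub> \<in> carrier (NM G)" using one_D by (auto simp: NM_def)
next
  fix x assume "x \<in> carrier (NM G)"
  thus "\<one>\<^bsub>NM G\<^esub> \<otimes>\<^bsub>NM G\<^esub> x = x" "x \<otimes>\<^bsub>NM G\<^esub> \<one>\<^bsub>NM G\<^esub> = x"
    by (auto simp: NM_def nmult_def D_carrier)
qed

lemma NM_zero_simple: "zero_simple_sgrp (NM G)"
  unfolding zero_simple_sgrp_def
proof (intro exI[of _ None] conjI allI impI)
  show "is_zero (NM G) None" by (auto simp: is_zero_def NM_def)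
next
  show "\<exists>x\<in>carrier (NM G). \<exists>y\<in>carrier (NM G). x \<otimes>\<^bsub>NM G\<^esub> y \<noteq> None"
  proof -
    have "Some \<one> \<otimes>\<^bsub>NM G\<^esub> Some \<one> \<noteq> None" using one_D by (simp add: NM_def nmult_def)
    moreover have "Some \<one> \<in> carrier (NM G)" using one_D by (simp add: NM_def)
    ultimately show ?thesis by blast
  qed
next
  fix I assume I: "sgrp_ideal (NM G) I"
  have Isub: "I \<subseteq> carrier (NM G)" and Ine: "I \<noteq> {}"
    and Icl: "\<And>x a y. x \<in> carrier (NM G) \<Longrightarrow> a \<in> I \<Longrightarrow> y \<in> carrier (NM G) \<Longrightarrow>
        x \<otimes>\<^bsub>NM G\<^esub> a \<otimes>\<^bsub>NM G\<^esub> y \<in> I"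
    using I unfolding sgrp_ideal_def by auto
  show "I = {None} \<or> I = carrier (NM G)"
  proof (cases "\<exists>a. Some a \<in> I")
    case False
    hence "I \<subseteq> {None}" by (metis not_None_eq subsetI singletonI)
    hence "I = {None}" using Ine by blast
    thus ?thesis by blast
  next
    case True
    then obtain a where a: "Some a \<in> I" by auto
    with Isub have aD: "a \<in> Dset G" by (auto simp: NM_def)
    then obtain u v where uv: "u \<in> carrier G" "v \<in> carrier G" "u \<otimes> a \<otimes> v = \<one>"
      and ac: "a \<in> carrier G" unfolding Dset_def by auto
    have "\<one> \<otimes> (u \<otimes> a) \<otimes> v = \<one>" using uv ac by simp
    hence uaD: "u \<otimes> a \<in> Dset G" using uv ac unfolding Dset_def by blast
    have uD: "u \<in> Dset G" using D_left uaD uv ac by auto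
    have vD: "v \<in> Dset G" using D_right[of "u \<otimes> a" v] uv ac one_D by auto
    have "Some u \<otimes>\<^bsub>NM G\<^esub> Some a \<otimes>\<^bsub>NM G\<^esub> Some v = Some \<one>"
      using uaD uv one_D by (simp add: NM_def nmult_def)
    moreover have "Some u \<in> carrier (NM G)" "Some v \<in> carrier (NM G)"
      using uD vD by (auto simp: NM_def)
    ultimately have one: "Some \<one> \<in> I" using Icl[OF _ a] by metis
    have o1: "Some \<one> \<in> carrier (NM G)" using one_D by (auto simp: NM_def)
    have "carrier (NM G) \<subseteq> I"
    proof
      fix x assume x: "x \<in> carrier (NM G)"
      have "x \<otimes>\<^bsub>NM G\<^esub> Some \<one> \<otimes>\<^bsub>NM G\<^esub> Some \<one> = x"
        using x one_D by (auto simp: NM_def nmult_def D_carrier)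
      thus "x \<in> I" using Icl[OF x one o1] by simp
    qed
    with Isub show ?thesis by blast
  qed
qed


lemma sim1:
  fixes Gr :: "('n, 't, 'a) val_grammar" and Gr' :: "('n, 't, 'a option) val_grammar"
  assumes lab: "\<forall>(A,\<alpha>,n)\<in>rules Gr. n \<in> carrier G"
    and incl: "\<forall>(A,\<alpha>,n)\<in>rules Gr. n \<in> Dset G \<longrightarrow> (A,\<alpha>,Some n) \<in> rules Gr'"
    and st: "(s,t) \<in> (val_step G Gr)\<^sup>*" and s: "snd s \<in> carrier G"
  shows "snd t \<in> carrier G \<and> (snd t \<in> Dset G \<longrightarrow>
     ((fst s, Some (snd s)), (fst t, Some (snd t))) \<in> (val_step (NM G) Gr')\<^sup>*)"
  using st
proof (induction t rule: rtrancl_induct)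
  case base
  then show ?case using s by simp
next
  case (step y z)
  from step.hyps(2) obtain w1 w2 A \<alpha> m n where y: "y = (w1 @ [Inl A] @ w2, m)"
    and z: "z = (w1 @ \<alpha> @ w2, m \<otimes> n)" and r: "(A, \<alpha>, n) \<in> rules Gr"
    unfolding val_step_def by blast
  have nc: "n \<in> carrier G" using lab r by auto
  have mc: "m \<in> carrier G" using step.IH y by simp
  show ?case
  proof (intro conjI impI)
    show "snd z \<in> carrier G" using z nc mc by simp
    assume "snd z \<in> Dset G"
    hence mnD: "m \<otimes> n \<in> Dset G" using z by simp
    have mD: "m \<in> Dset G" using D_left[OF mnD mc nc] .
    have nD: "n \<in> Dset G" using D_right[OF mnD mc nc] .
    have p1: "((fst s, Some (snd s)), (w1 @ [Inl A] @ w2, Some m)) \<in> (val_step (NM G) Gr')\<^sup>*"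
      using step.IH y mD by simp
    have r': "(A, \<alpha>, Some n) \<in> rules Gr'" using incl r nD by auto
    have eq: "Some m \<otimes>\<^bsub>NM G\<^esub> Some n = Some (m \<otimes> n)" using mnD by (simp add: NM_def nmult_def)
    have "((w1 @ [Inl A] @ w2, Some m), (w1 @ \<alpha> @ w2, Some m \<otimes>\<^bsub>NM G\<^esub> Some n)) \<in> val_step (NM G) Gr'"
      unfolding val_step_def using r' by blast
    hence "((w1 @ [Inl A] @ w2, Some m), (w1 @ \<alpha> @ w2, Some (m \<otimes> n))) \<in> val_step (NM G) Gr'"
      using eq by simp
    with p1 show "((fst s, Some (snd s)), (fst z, Some (snd z))) \<in> (val_step (NM G) Gr')\<^sup>*"
      using z by simp
  qed
qed

lemma sim2:
  fixes Gr :: "('n, 't, 'a) val_grammar" and Gr' :: "('n, 't, 'a option) val_grammar"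
  assumes incl2: "\<forall>A \<alpha> n. (A,\<alpha>,Some n) \<in> rules Gr' \<longrightarrow> (A,\<alpha>,n) \<in> rules Gr"
    and st: "(s,t) \<in> (val_step (NM G) Gr')\<^sup>*" and s: "snd s = Some m"
  shows "snd t = Some p \<Longrightarrow> ((fst s, m), (fst t, p)) \<in> (val_step G Gr)\<^sup>*"
  using st
proof (induction t arbitrary: p rule: rtrancl_induct)
  case base
  then show ?case using s by simp
next
  case (step y z)
  from step.hyps(2) obtain w1 w2 A \<alpha> q ov where y: "y = (w1 @ [Inl A] @ w2, q)"
    and z: "z = (w1 @ \<alpha> @ w2, q \<otimes>\<^bsub>NM G\<^esub> ov)" and r: "(A, \<alpha>, ov) \<in> rules Gr'"
    unfolding val_step_def by blast
  have "nmult G q ov = Some p" using z step.prems by (simp add: NM_def)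
  then obtain a b where ab: "q = Some a" "ov = Some b" "p = a \<otimes> b"
    by (auto simp: nmult_Some_iff)
  have p1: "((fst s, m), (w1 @ [Inl A] @ w2, a)) \<in> (val_step G Gr)\<^sup>*"
    using step.IH[of a] y ab by simp
  have r': "(A, \<alpha>, b) \<in> rules Gr" using incl2 r ab by auto
  have "((w1 @ [Inl A] @ w2, a), (w1 @ \<alpha> @ w2, a \<otimes> b)) \<in> val_step G Gr"
    unfolding val_step_def using r' by blast
  with p1 show ?case using z ab by simp
qed

lemma lang_eq:
  fixes Gr :: "('n, 't, 'a) val_grammar" and Gr' :: "('n, 't, 'a option) val_grammar"
  assumes lab: "\<forall>(A,\<alpha>,n)\<in>rules Gr. n \<in> carrier G"
    and incl: "\<forall>(A,\<alpha>,n)\<in>rules Gr. n \<in> Dset G \<longrightarrow> (A,\<alpha>,Some n) \<in> rules Gr'"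
    and incl2: "\<forall>A \<alpha> n. (A,\<alpha>,Some n) \<in> rules Gr' \<longrightarrow> (A,\<alpha>,n) \<in> rules Gr"
    and tm: "terms Gr' = terms Gr" and st: "start Gr' = start Gr"
  shows "val_lang G Gr = val_lang (NM G) Gr'"
proof -
  have one_eq: "\<one>\<^bsub>NM G\<^esub> = Some \<one>" by (simp add: NM_def)
  show ?thesis
  proof (rule Set.set_eqI, rule iffI)
    fix w assume "w \<in> val_lang G Gr"
    hence w: "set w \<subseteq> terms Gr" "(([Inl (start Gr)], \<one>), (map Inr w, \<one>)) \<in> (val_step G Gr)\<^sup>*"
      by (auto simp: val_lang_def)
    from sim1[OF lab incl w(2)] one_D
    have "(([Inl (start Gr)], Some \<one>), (map Inr w, Some \<one>)) \<in> (val_step (NM G) Gr')\<^sup>*"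
      by simp
    thus "w \<in> val_lang (NM G) Gr'" using w tm st one_eq by (simp add: val_lang_def)
  next
    fix w assume "w \<in> val_lang (NM G) Gr'"
    hence w: "set w \<subseteq> terms Gr'" "(([Inl (start Gr')], Some \<one>), (map Inr w, Some \<one>)) \<in> (val_step (NM G) Gr')\<^sup>*"
      using one_eq by (auto simp: val_lang_def)
    from sim2[OF incl2 w(2), of \<one> \<one>]
    have "(([Inl (start Gr)], \<one>), (map Inr w, \<one>)) \<in> (val_step G Gr)\<^sup>*" using st by simp
    thus "w \<in> val_lang G Gr" using w tm by (simp add: val_lang_def)
  qed
qed

end

lemma validD:
  assumes "valid_val_grammar M G" "(A,\<alpha>,n) \<in> rules G"
  shows "A \<in> nonterms G" "n \<in> carrier M" "set \<alpha> \<subseteq> Inl ` nonterms G \<union> Inr ` terms G"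
  using assms unfolding valid_val_grammar_def by fast+

lemma validI:
  assumes "finite (nonterms G)" "finite (terms G)" "finite (rules G)" "start G \<in> nonterms G"
    and "\<And>A \<alpha> n. (A,\<alpha>,n) \<in> rules G \<Longrightarrow> A \<in> nonterms G \<and> n \<in> carrier M \<and>
         set \<alpha> \<subseteq> Inl ` nonterms G \<union> Inr ` terms G"
  shows "valid_val_grammar M G"
  using assms unfolding valid_val_grammar_def by fast

theorem corollary5:
  fixes M :: "'a monoid"
  assumes "monoid M"
  shows "\<exists>N :: 'a option monoid. monoid N \<and> (simple_sgrp N \<or> zero_simple_sgrp N) \<and>
           val_cf_family M = val_cf_family N"
proof (intro exI conjI)
  interpret monoid M by fact
  show "monoid (NM M)" by (rule NM_monoid)
  show "simple_sgrp (NM M) \<or> zero_simple_sgrp (NM M)" using NM_zero_simple by blast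
  show "val_cf_family M = val_cf_family (NM M)"
  proof (rule Set.set_eqI, rule iffI)
    fix L assume "L \<in> val_cf_family M"
    then obtain Gr :: "(nat, nat, 'a) val_grammar" where v: "valid_val_grammar M Gr"
      and L: "L = val_lang M Gr" by (auto simp: val_cf_family_def)
    define f where "f = (\<lambda>(A::nat, \<alpha>::(nat + nat) list, n). (A, \<alpha>, if n \<in> Dset M then Some n else None))"
    define Gr' where "Gr' = \<lparr>nonterms = nonterms Gr, terms = terms Gr, rules = f ` rules Gr, start = start Gr\<rparr>"
    have v0: "\<forall>(A,\<alpha>,n)\<in>rules Gr. A \<in> nonterms Gr \<and> n \<in> carrier M \<and>
        set \<alpha> \<subseteq> Inl ` nonterms Gr \<union> Inr ` terms Gr"
      using v unfolding valid_val_grammar_def by blast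
    have "\<forall>(A,\<alpha>,ov)\<in>f ` rules Gr. A \<in> nonterms Gr \<and> ov \<in> carrier (NM M) \<and>
        set \<alpha> \<subseteq> Inl ` nonterms Gr \<union> Inr ` terms Gr"
    proof
      fix r assume "r \<in> f ` rules Gr"
      then obtain A \<alpha> n where r: "(A,\<alpha>,n) \<in> rules Gr" "r = f (A,\<alpha>,n)" by auto
      have c: "(if n \<in> Dset M then Some n else None) \<in> carrier (NM M)" by (simp add: NM_def)
      show "case r of (A,\<alpha>,ov) \<Rightarrow> A \<in> nonterms Gr \<and> ov \<in> carrier (NM M) \<and>
        set \<alpha> \<subseteq> Inl ` nonterms Gr \<union> Inr ` terms Gr"
        using r v0 c unfolding f_def by auto
    qed
    hence v': "valid_val_grammar (NM M) Gr'"
      using v unfolding valid_val_grammar_def Gr'_def by simp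
    have lab: "\<forall>(A,\<alpha>,n)\<in>rules Gr. n \<in> carrier M" using v unfolding valid_val_grammar_def by auto
    have incl: "\<forall>(A,\<alpha>,n)\<in>rules Gr. n \<in> Dset M \<longrightarrow> (A,\<alpha>,Some n) \<in> rules Gr'"
    proof (intro ballI)
      fix r assume r: "r \<in> rules Gr"
      obtain A \<alpha> n where rr: "r = (A,\<alpha>,n)" by (cases r) auto
      have mem: "f (A,\<alpha>,n) \<in> f ` rules Gr" using r rr by blast
      have "n \<in> Dset M \<longrightarrow> (A,\<alpha>,Some n) \<in> rules Gr'"
      proof
        assume "n \<in> Dset M"
        hence eq: "f (A,\<alpha>,n) = (A,\<alpha>,Some n)" unfolding f_def by simp
        have "rules Gr' = f ` rules Gr" unfolding Gr'_def by simp
        thus "(A,\<alpha>,Some n) \<in> rules Gr'" using mem eq by metis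
      qed
      thus "case r of (A,\<alpha>,n) \<Rightarrow> n \<in> Dset M \<longrightarrow> (A,\<alpha>,Some n) \<in> rules Gr'"
        using rr by simp
    qed
    have incl2: "\<forall>A \<alpha> n. (A,\<alpha>,Some n) \<in> rules Gr' \<longrightarrow> (A,\<alpha>,n) \<in> rules Gr"
    proof (intro allI impI)
      fix A \<alpha> n assume "(A,\<alpha>,Some n) \<in> rules Gr'"
      then obtain r where r: "r \<in> rules Gr" "f r = (A,\<alpha>,Some n)" unfolding Gr'_def by auto
      obtain A' \<alpha>' n' where rr: "r = (A',\<alpha>',n')" by (cases r) auto
      from r(2) rr have "A' = A" "\<alpha>' = \<alpha>" "n' = n" unfolding f_def by (auto split: if_splits)
      thus "(A,\<alpha>,n) \<in> rules Gr" using r rr by simp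
    qed
    have "L = val_lang (NM M) Gr'" using lang_eq[OF lab incl incl2] L by (simp add: Gr'_def)
    with v' show "L \<in> val_cf_family (NM M)" by (auto simp: val_cf_family_def)
  next
    fix L assume "L \<in> val_cf_family (NM M)"
    then obtain Gr' :: "(nat, nat, 'a option) val_grammar" where v': "valid_val_grammar (NM M) Gr'"
      and L: "L = val_lang (NM M) Gr'" by (auto simp: val_cf_family_def)
    define Gr where "Gr = \<lparr>nonterms = nonterms Gr', terms = terms Gr', rules = {(A, \<alpha>, n). (A, \<alpha>, Some n) \<in> rules Gr'}, start = start Gr'\<rparr>"
    have sub: "rules Gr \<subseteq> (\<lambda>(A, \<alpha>, ov). (A, \<alpha>, the ov)) ` rules Gr'"
    proof
      fix r assume "r \<in> rules Gr"
      then obtain A \<alpha> n where r: "(A,\<alpha>,Some n) \<in> rules Gr'" "r = (A,\<alpha>,n)"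
        unfolding Gr_def by auto
      have "r = (\<lambda>(A, \<alpha>, ov). (A, \<alpha>, the ov)) (A,\<alpha>,Some n)" using r by simp
      thus "r \<in> (\<lambda>(A, \<alpha>, ov). (A, \<alpha>, the ov)) ` rules Gr'" using r(1) by blast
    qed
    have fin: "finite (rules Gr)"
    proof -
      have "finite (rules Gr')" using v' by (simp add: valid_val_grammar_def)
      thus ?thesis using finite_subset[OF sub] by blast
    qed
    have v: "valid_val_grammar M Gr"
    proof (rule validI)
      show "finite (nonterms Gr)" "finite (terms Gr)" "start Gr \<in> nonterms Gr"
        using v' unfolding Gr_def valid_val_grammar_def by simp_all
      show "finite (rules Gr)" by (rule fin)
      fix A \<alpha> n assume "(A,\<alpha>,n) \<in> rules Gr"
      hence r: "(A,\<alpha>,Some n) \<in> rules Gr'" unfolding Gr_def by simp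
      have "Some n \<in> carrier (NM M)" by (rule validD(2)[OF v' r])
      hence "n \<in> carrier M" by (auto simp: NM_def D_carrier)
      thus "A \<in> nonterms Gr \<and> n \<in> carrier M \<and> set \<alpha> \<subseteq> Inl ` nonterms Gr \<union> Inr ` terms Gr"
        using validD(1,3)[OF v' r] unfolding Gr_def by simp
    qed
    have lab: "\<forall>(A,\<alpha>,n)\<in>rules Gr. n \<in> carrier M"
    proof
      fix r assume r: "r \<in> rules Gr"
      obtain A \<alpha> n where rr: "r = (A,\<alpha>,n)" by (cases r) auto
      show "case r of (A,\<alpha>,n) \<Rightarrow> n \<in> carrier M" using validD(2)[OF v r[unfolded rr]] rr by simp
    qed
    have incl: "\<forall>(A,\<alpha>,n)\<in>rules Gr. n \<in> Dset M \<longrightarrow> (A,\<alpha>,Some n) \<in> rules Gr'"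
    proof
      fix r assume r: "r \<in> rules Gr"
      obtain A \<alpha> n where rr: "r = (A,\<alpha>,n)" by (cases r) auto
      have "(A,\<alpha>,Some n) \<in> rules Gr'" using r unfolding rr Gr_def by simp
      thus "case r of (A,\<alpha>,n) \<Rightarrow> n \<in> Dset M \<longrightarrow> (A,\<alpha>,Some n) \<in> rules Gr'" using rr by simp
    qed
    have incl2: "\<forall>A \<alpha> n. (A,\<alpha>,Some n) \<in> rules Gr' \<longrightarrow> (A,\<alpha>,n) \<in> rules Gr"
      unfolding Gr_def by simp
    have tm: "terms Gr' = terms Gr" and st: "start Gr' = start Gr" unfolding Gr_def by simp_all
    have "val_lang M Gr = val_lang (NM M) Gr'" by (rule lang_eq[OF lab incl incl2 tm st])
    hence "val_lang M Gr = L" using L by simp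
    thus "L \<in> val_cf_family M" using v unfolding val_cf_family_def by blast
  qed
qed

end
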